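(* Let $\mathfrak{p}$ be a prime ideal in a pc monoid $A$. Then: (1) $A/\mathfrak{p}$ is a cancellative monoid; (2) if $A$ is pctf, then $(A/\mathfrak{p})^+$ is a torsionfree pointed group; (3) if $A$ is cancellative and normal, then $A/\mathfrak{p}$ is cancellative and normal.
   Context: A monoid is a pointed commutative monoid (basepoint $0$, $0\cdot a=0$, identity $1$). An ideal is a subset $I\ni0$ with $AI\subseteq I$; $A/I$ collapses $I$ to $0$; a proper ideal $\mathfrak{p}$ is prime if $A\setminus\mathfrak{p}$ is multiplicatively closed. $A$ is cancellative if $ac=bc$ with $c\ne0$ implies $a=b$; pc if $A\cong C/I$ with $C$ cancellative; pctf if $A\cong C/I$ with $C$ cancellative and torsionfree ($a^n=b^n$ for some $n\ge1$ implies $a=b$). For cancellative $C$, the pointed group completion $C^+$ is the group completion of $C\setminus\{0\}$ with a basepoint adjoined; a pointed group is torsionfree if its underlying group (without basepoint) is. The normalization of a cancellative $A$ is $A_{\mathrm{nor}}=\{\alpha\in A^+:\alpha^n\in A\text{ for some }n\ge1\}$ and $A$ is normal if $A=A_{\mathrm{nor}}$. *)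

theory Defs
  imports Main
begin

record 'a pmon =
  pm_carrier :: "'a set"
  pm_mult :: "'a \<Rightarrow> 'a \<Rightarrow> 'a"
  pm_one :: 'a
  pm_zero :: 'a

definition pointed_monoid :: "'a pmon \<Rightarrow> bool" where
  "pointed_monoid M \<longleftrightarrow>
     pm_one M \<in> pm_carrier M \<and> pm_zero M \<in> pm_carrier M \<and>
     (\<forall>a\<in>pm_carrier M. \<forall>b\<in>pm_carrier M. pm_mult M a b \<in> pm_carrier M) \<and>
     (\<forall>a\<in>pm_carrier M. \<forall>b\<in>pm_carrier M. \<forall>c\<in>pm_carrier M.
        pm_mult M (pm_mult M a b) c = pm_mult M a (pm_mult M b c)) \<and>
     (\<forall>a\<in>pm_carrier M. \<forall>b\<in>pm_carrier M. pm_mult M a b = pm_mult M b a) \<and>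
     (\<forall>a\<in>pm_carrier M. pm_mult M (pm_one M) a = a) \<and>
     (\<forall>a\<in>pm_carrier M. pm_mult M (pm_zero M) a = pm_zero M)"

primrec pm_pow :: "'a pmon \<Rightarrow> 'a \<Rightarrow> nat \<Rightarrow> 'a" where
  "pm_pow M x 0 = pm_one M"
| "pm_pow M x (Suc n) = pm_mult M x (pm_pow M x n)"

definition pm_ideal :: "'a pmon \<Rightarrow> 'a set \<Rightarrow> bool" where
  "pm_ideal M I \<longleftrightarrow> I \<subseteq> pm_carrier M \<and> pm_zero M \<in> I \<and>
     (\<forall>a\<in>pm_carrier M. \<forall>x\<in>I. pm_mult M a x \<in> I)"

definition pm_prime_ideal :: "'a pmon \<Rightarrow> 'a set \<Rightarrow> bool" where
  "pm_prime_ideal M P \<longleftrightarrow> pm_ideal M P \<and> P \<noteq> pm_carrier M \<and>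
     (\<forall>a\<in>pm_carrier M - P. \<forall>b\<in>pm_carrier M - P. pm_mult M a b \<notin> P)"

definition pm_quot :: "'a pmon \<Rightarrow> 'a set \<Rightarrow> 'a pmon" where
  "pm_quot M I =
     \<lparr> pm_carrier = (pm_carrier M - I) \<union> {pm_zero M},
       pm_mult = (\<lambda>a b. if a \<in> I \<or> b \<in> I \<or> pm_mult M a b \<in> I then pm_zero M else pm_mult M a b),
       pm_one = (if pm_one M \<in> I then pm_zero M else pm_one M),
       pm_zero = pm_zero M \<rparr>"

definition pm_iso :: "('a \<Rightarrow> 'b) \<Rightarrow> 'a pmon \<Rightarrow> 'b pmon \<Rightarrow> bool" where
  "pm_iso f M N \<longleftrightarrow> bij_betw f (pm_carrier M) (pm_carrier N) \<and>
     (\<forall>a\<in>pm_carrier M. \<forall>b\<in>pm_carrier M. f (pm_mult M a b) = pm_mult N (f a) (f b)) \<and>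
     f (pm_one M) = pm_one N \<and> f (pm_zero M) = pm_zero N"

definition cancellative :: "'a pmon \<Rightarrow> bool" where
  "cancellative M \<longleftrightarrow> pointed_monoid M \<and>
     (\<forall>a\<in>pm_carrier M. \<forall>b\<in>pm_carrier M. \<forall>c\<in>pm_carrier M.
        c \<noteq> pm_zero M \<longrightarrow> pm_mult M a c = pm_mult M b c \<longrightarrow> a = b)"

definition torsionfree :: "'a pmon \<Rightarrow> bool" where
  "torsionfree M \<longleftrightarrow> (\<forall>a\<in>pm_carrier M. \<forall>b\<in>pm_carrier M. \<forall>n::nat. n \<ge> 1 \<longrightarrow>
        pm_pow M a n = pm_pow M b n \<longrightarrow> a = b)"

text \<open>The type of C is passed as a parameter; a free type variable in a hypothesis
  amounts to existential quantification over the type.\<close>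
definition pc :: "'c itself \<Rightarrow> 'a pmon \<Rightarrow> bool" where
  "pc _ A \<longleftrightarrow> (\<exists>(C::'c pmon) I f. cancellative C \<and> pm_ideal C I \<and> pm_iso f (pm_quot C I) A)"

definition pctf :: "'c itself \<Rightarrow> 'a pmon \<Rightarrow> bool" where
  "pctf _ A \<longleftrightarrow> (\<exists>(C::'c pmon) I f. cancellative C \<and> torsionfree C \<and> pm_ideal C I \<and>
      pm_iso f (pm_quot C I) A)"

definition gc_rel :: "'a pmon \<Rightarrow> (('a \<times> 'a) \<times> ('a \<times> 'a)) set" where
  "gc_rel C = {((a,b),(c,d)). a \<in> pm_carrier C - {pm_zero C} \<and> b \<in> pm_carrier C - {pm_zero C} \<and>
       c \<in> pm_carrier C - {pm_zero C} \<and> d \<in> pm_carrier C - {pm_zero C} \<and>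
       pm_mult C a d = pm_mult C b c}"

text \<open>Elements of C^+: equivalence classes of fractions a/b, plus the basepoint (the empty set).\<close>
definition group_completion :: "'a pmon \<Rightarrow> ('a \<times> 'a) set pmon" where
  "group_completion C =
     \<lparr> pm_carrier = ((pm_carrier C - {pm_zero C}) \<times> (pm_carrier C - {pm_zero C})) // gc_rel C \<union> {{}},
       pm_mult = (\<lambda>X Y. \<Union>p\<in>X. \<Union>q\<in>Y. gc_rel C `` {(pm_mult C (fst p) (fst q), pm_mult C (snd p) (snd q))}),
       pm_one = gc_rel C `` {(pm_one C, pm_one C)},
       pm_zero = {} \<rparr>"

definition gc_emb :: "'a pmon \<Rightarrow> 'a \<Rightarrow> ('a \<times> 'a) set" where
  "gc_emb C a = (if a = pm_zero C then {} else gc_rel C `` {(a, pm_one C)})"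

definition pointed_group :: "'a pmon \<Rightarrow> bool" where
  "pointed_group G \<longleftrightarrow> pointed_monoid G \<and> pm_one G \<noteq> pm_zero G \<and>
     (\<forall>x\<in>pm_carrier G - {pm_zero G}. \<exists>y\<in>pm_carrier G. pm_mult G x y = pm_one G)"

definition torsionfree_pgroup :: "'a pmon \<Rightarrow> bool" where
  "torsionfree_pgroup G \<longleftrightarrow> pointed_group G \<and>
     (\<forall>x\<in>pm_carrier G - {pm_zero G}. \<forall>n::nat. n \<ge> 1 \<longrightarrow> pm_pow G x n = pm_one G \<longrightarrow> x = pm_one G)"

definition normalization :: "'a pmon \<Rightarrow> ('a \<times> 'a) set set" where
  "normalization C = {\<alpha> \<in> pm_carrier (group_completion C).
      \<exists>n::nat. n \<ge> 1 \<and> pm_pow (group_completion C) \<alpha> n \<in> gc_emb C ` pm_carrier C}"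

definition normal :: "'a pmon \<Rightarrow> bool" where
  "normal C \<longleftrightarrow> normalization C = gc_emb C ` pm_carrier C"

end

theory Submission
  imports Defs
begin

locale pmono =
  fixes M :: "'a pmon"
  assumes pm: "pointed_monoid M"
begin

lemma closed[intro,simp]: "a \<in> pm_carrier M \<Longrightarrow> b \<in> pm_carrier M \<Longrightarrow> pm_mult M a b \<in> pm_carrier M"
  using pm unfolding pointed_monoid_def by blast
lemma one_in[simp]: "pm_one M \<in> pm_carrier M" using pm unfolding pointed_monoid_def by blast
lemma zero_in[simp]: "pm_zero M \<in> pm_carrier M" using pm unfolding pointed_monoid_def by blast
lemma assoc: "a \<in> pm_carrier M \<Longrightarrow> b \<in> pm_carrier M \<Longrightarrow> c \<in> pm_carrier M \<Longrightarrow>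
   pm_mult M (pm_mult M a b) c = pm_mult M a (pm_mult M b c)"
  using pm unfolding pointed_monoid_def by blast
lemma comm: "a \<in> pm_carrier M \<Longrightarrow> b \<in> pm_carrier M \<Longrightarrow> pm_mult M a b = pm_mult M b a"
  using pm unfolding pointed_monoid_def by blast
lemma lcomm: "a \<in> pm_carrier M \<Longrightarrow> b \<in> pm_carrier M \<Longrightarrow> c \<in> pm_carrier M \<Longrightarrow>
   pm_mult M a (pm_mult M b c) = pm_mult M b (pm_mult M a c)"
  by (metis assoc comm)
lemmas ac = assoc comm lcomm
lemma one_l[simp]: "a \<in> pm_carrier M \<Longrightarrow> pm_mult M (pm_one M) a = a"
  using pm unfolding pointed_monoid_def by blast
lemma one_r[simp]: "a \<in> pm_carrier M \<Longrightarrow> pm_mult M a (pm_one M) = a"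
  using comm one_l one_in by metis
lemma zero_l[simp]: "a \<in> pm_carrier M \<Longrightarrow> pm_mult M (pm_zero M) a = pm_zero M"
  using pm unfolding pointed_monoid_def by blast
lemma zero_r[simp]: "a \<in> pm_carrier M \<Longrightarrow> pm_mult M a (pm_zero M) = pm_zero M"
  using comm zero_l zero_in by metis
lemma pow_closed[simp]: "a \<in> pm_carrier M \<Longrightarrow> pm_pow M a n \<in> pm_carrier M"
  by (induction n) auto
end

locale canc = pmono +
  assumes canc: "cancellative M" and one_ne: "pm_one M \<noteq> pm_zero M"
begin

lemma cancel: "a \<in> pm_carrier M \<Longrightarrow> b \<in> pm_carrier M \<Longrightarrow> c \<in> pm_carrier M \<Longrightarrow> c \<noteq> pm_zero M
  \<Longrightarrow> pm_mult M a c = pm_mult M b c \<Longrightarrow> a = b"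
  using canc unfolding cancellative_def by blast

lemma dom: "a \<in> pm_carrier M - {pm_zero M} \<Longrightarrow> b \<in> pm_carrier M - {pm_zero M} \<Longrightarrow>
   pm_mult M a b \<in> pm_carrier M - {pm_zero M}"
  using cancel[of a "pm_zero M" b] by auto

lemma one_S[simp]: "pm_one M \<in> pm_carrier M - {pm_zero M}" using one_ne by simp

lemma pow_S: "a \<in> pm_carrier M - {pm_zero M} \<Longrightarrow> pm_pow M a n \<in> pm_carrier M - {pm_zero M}"
proof (induction n)
  case (Suc n) then show ?case using dom[of a "pm_pow M a n"] by simp
qed (simp add: one_ne)

lemma R_iff: "((a,b),(c,d)) \<in> gc_rel M \<longleftrightarrow> a \<in> pm_carrier M - {pm_zero M} \<and> b \<in> pm_carrier M - {pm_zero M}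
   \<and> c \<in> pm_carrier M - {pm_zero M} \<and> d \<in> pm_carrier M - {pm_zero M} \<and> pm_mult M a d = pm_mult M b c"
  unfolding gc_rel_def by simp

lemma R_trans: "((a,b),(c,d)) \<in> gc_rel M \<Longrightarrow> ((c,d),(g,h)) \<in> gc_rel M \<Longrightarrow> ((a,b),(g,h)) \<in> gc_rel M"
proof -
  assume h1: "((a,b),(c,d)) \<in> gc_rel M" and h2: "((c,d),(g,h)) \<in> gc_rel M"
  have C: "a \<in> pm_carrier M" "b \<in> pm_carrier M" "c \<in> pm_carrier M" "d \<in> pm_carrier M"
      "g \<in> pm_carrier M" "h \<in> pm_carrier M" using h1 h2 unfolding R_iff by blast+
  have N: "a \<noteq> pm_zero M" "b \<noteq> pm_zero M" "c \<noteq> pm_zero M" "d \<noteq> pm_zero M"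
      "g \<noteq> pm_zero M" "h \<noteq> pm_zero M" using h1 h2 unfolding R_iff by blast+
  have e1: "pm_mult M a d = pm_mult M b c" and e2: "pm_mult M c h = pm_mult M d g"
    using h1 h2 unfolding R_iff by blast+
  have "pm_mult M (pm_mult M a h) (pm_mult M c d) = pm_mult M (pm_mult M a d) (pm_mult M c h)"
    using C by (simp add: ac)
  also have "\<dots> = pm_mult M (pm_mult M b c) (pm_mult M d g)" using e1 e2 by simp
  also have "\<dots> = pm_mult M (pm_mult M b g) (pm_mult M c d)" using C by (simp add: ac)
  finally have eq: "pm_mult M (pm_mult M a h) (pm_mult M c d) = pm_mult M (pm_mult M b g) (pm_mult M c d)" .
  have cd: "pm_mult M c d \<in> pm_carrier M - {pm_zero M}" using dom[of c d] C N by blast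
  have "pm_mult M a h = pm_mult M b g"
    using cancel[OF _ _ _ _ eq] cd C by blast
  then show ?thesis using C N unfolding R_iff by blast
qed

lemma R_equiv: "equiv ((pm_carrier M - {pm_zero M}) \<times> (pm_carrier M - {pm_zero M})) (gc_rel M)"
proof -
  have sub: "gc_rel M \<subseteq> ((pm_carrier M - {pm_zero M}) \<times> (pm_carrier M - {pm_zero M})) \<times>
      ((pm_carrier M - {pm_zero M}) \<times> (pm_carrier M - {pm_zero M}))" unfolding gc_rel_def by blast
  have r: "refl_on ((pm_carrier M - {pm_zero M}) \<times> (pm_carrier M - {pm_zero M})) (gc_rel M)"
    unfolding refl_on_def
  proof (intro ballI)
    fix p assume "p \<in> (pm_carrier M - {pm_zero M}) \<times> (pm_carrier M - {pm_zero M})"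
    then show "(p,p) \<in> gc_rel M" by (cases p) (simp add: R_iff comm)
  qed
  have s: "sym (gc_rel M)" unfolding sym_def
  proof (intro allI impI)
    fix p q assume "(p,q) \<in> gc_rel M"
    then show "(q,p) \<in> gc_rel M" by (cases p, cases q) (simp add: R_iff comm)
  qed
  have t: "trans (gc_rel M)" unfolding trans_def
  proof (intro allI impI)
    fix p q r assume "(p,q) \<in> gc_rel M" "(q,r) \<in> gc_rel M"
    then show "(p,r) \<in> gc_rel M" by (cases p, cases q, cases r) (metis R_trans)
  qed
  show ?thesis using sub r s t by (rule equivI)
qed

lemma class_eq: "p \<in> (pm_carrier M - {pm_zero M}) \<times> (pm_carrier M - {pm_zero M}) \<Longrightarrow>
  q \<in> (pm_carrier M - {pm_zero M}) \<times> (pm_carrier M - {pm_zero M}) \<Longrightarrow>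
  gc_rel M `` {p} = gc_rel M `` {q} \<longleftrightarrow> (p,q) \<in> gc_rel M"
  using eq_equiv_class_iff[OF R_equiv] by blast

lemma class_self: "p \<in> (pm_carrier M - {pm_zero M}) \<times> (pm_carrier M - {pm_zero M}) \<Longrightarrow> p \<in> gc_rel M `` {p}"
  using equiv_class_self[OF R_equiv] by blast

definition pm2 where "pm2 p q = (pm_mult M (fst p) (fst q), pm_mult M (snd p) (snd q))"

lemma pm2_S: "p \<in> (pm_carrier M - {pm_zero M}) \<times> (pm_carrier M - {pm_zero M}) \<Longrightarrow>
  q \<in> (pm_carrier M - {pm_zero M}) \<times> (pm_carrier M - {pm_zero M}) \<Longrightarrow>
  pm2 p q \<in> (pm_carrier M - {pm_zero M}) \<times> (pm_carrier M - {pm_zero M})"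
  unfolding pm2_def mem_Times_iff fst_conv snd_conv using dom by blast

lemma compat: "(p,p') \<in> gc_rel M \<Longrightarrow> (q,q') \<in> gc_rel M \<Longrightarrow> (pm2 p q, pm2 p' q') \<in> gc_rel M"
proof -
  assume h1: "(p,p') \<in> gc_rel M" and h2: "(q,q') \<in> gc_rel M"
  obtain a b a' b' c d c' d' where eq: "p = (a,b)" "p' = (a',b')" "q = (c,d)" "q' = (c',d')"
    by (cases p, cases p', cases q, cases q') auto
  have h1': "((a,b),(a',b')) \<in> gc_rel M" and h2': "((c,d),(c',d')) \<in> gc_rel M" using h1 h2 eq by simp_all
  have C: "a \<in> pm_carrier M" "b \<in> pm_carrier M" "c \<in> pm_carrier M" "d \<in> pm_carrier M"
      "a' \<in> pm_carrier M" "b' \<in> pm_carrier M" "c' \<in> pm_carrier M" "d' \<in> pm_carrier M"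
    using h1' h2' unfolding R_iff by blast+
  have N: "a \<noteq> pm_zero M" "b \<noteq> pm_zero M" "c \<noteq> pm_zero M" "d \<noteq> pm_zero M"
      "a' \<noteq> pm_zero M" "b' \<noteq> pm_zero M" "c' \<noteq> pm_zero M" "d' \<noteq> pm_zero M"
    using h1' h2' unfolding R_iff by blast+
  have e1: "pm_mult M a b' = pm_mult M b a'" and e2: "pm_mult M c d' = pm_mult M d c'"
    using h1' h2' unfolding R_iff by blast+
  have "pm_mult M (pm_mult M a c) (pm_mult M b' d') = pm_mult M (pm_mult M a b') (pm_mult M c d')"
    using C by (simp add: ac)
  also have "\<dots> = pm_mult M (pm_mult M b a') (pm_mult M d c')" using e1 e2 by simp
  also have "\<dots> = pm_mult M (pm_mult M b d) (pm_mult M a' c')" using C by (simp add: ac)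
  finally have e: "pm_mult M (pm_mult M a c) (pm_mult M b' d') = pm_mult M (pm_mult M b d) (pm_mult M a' c')" .
  have D: "pm_mult M a c \<in> pm_carrier M - {pm_zero M}" "pm_mult M b d \<in> pm_carrier M - {pm_zero M}"
    "pm_mult M a' c' \<in> pm_carrier M - {pm_zero M}" "pm_mult M b' d' \<in> pm_carrier M - {pm_zero M}"
    using dom C N by blast+
  have "((pm_mult M a c, pm_mult M b d), (pm_mult M a' c', pm_mult M b' d')) \<in> gc_rel M"
    unfolding R_iff using D e by blast
  then show ?thesis unfolding eq pm2_def by simp
qed

lemma G_carrier: "pm_carrier (group_completion M) =
   ((pm_carrier M - {pm_zero M}) \<times> (pm_carrier M - {pm_zero M})) // gc_rel M \<union> {{}}"
  unfolding group_completion_def by (simp only: pmon.simps)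
lemma G_zero[simp]: "pm_zero (group_completion M) = {}"
  unfolding group_completion_def by (simp only: pmon.simps)
lemma G_one: "pm_one (group_completion M) = gc_rel M `` {(pm_one M, pm_one M)}"
  unfolding group_completion_def by (simp only: pmon.simps)
lemma G_mult_empty[simp]: "pm_mult (group_completion M) {} Y = {}" "pm_mult (group_completion M) X {} = {}"
  unfolding group_completion_def by (simp_all only: pmon.simps UN_empty SUP_empty UN_empty2)

lemma G_mult: "p \<in> (pm_carrier M - {pm_zero M}) \<times> (pm_carrier M - {pm_zero M}) \<Longrightarrow>
  q \<in> (pm_carrier M - {pm_zero M}) \<times> (pm_carrier M - {pm_zero M}) \<Longrightarrow>
  pm_mult (group_completion M) (gc_rel M `` {p}) (gc_rel M `` {q}) = gc_rel M `` {pm2 p q}"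
proof -
  assume p: "p \<in> (pm_carrier M - {pm_zero M}) \<times> (pm_carrier M - {pm_zero M})"
    and q: "q \<in> (pm_carrier M - {pm_zero M}) \<times> (pm_carrier M - {pm_zero M})"
  have "gc_rel M `` {pm2 p' q'} = gc_rel M `` {pm2 p q}" if "p' \<in> gc_rel M `` {p}" "q' \<in> gc_rel M `` {q}" for p' q'
  proof -
    have c: "(pm2 p q, pm2 p' q') \<in> gc_rel M" using that compat by blast
    then show ?thesis using equiv_class_eq[OF R_equiv c] by simp
  qed
  note eq = this
  have pq: "p \<in> gc_rel M `` {p}" "q \<in> gc_rel M `` {q}" using p q class_self by auto
  have E: "(\<Union>p'\<in>gc_rel M `` {p}. \<Union>q'\<in>gc_rel M `` {q}. gc_rel M `` {pm2 p' q'}) = gc_rel M `` {pm2 p q}"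
  proof (rule equalityI)
    show "(\<Union>p'\<in>gc_rel M `` {p}. \<Union>q'\<in>gc_rel M `` {q}. gc_rel M `` {pm2 p' q'}) \<subseteq> gc_rel M `` {pm2 p q}"
    proof (rule subsetI)
      fix x assume "x \<in> (\<Union>p'\<in>gc_rel M `` {p}. \<Union>q'\<in>gc_rel M `` {q}. gc_rel M `` {pm2 p' q'})"
      then obtain p' q' where "p' \<in> gc_rel M `` {p}" "q' \<in> gc_rel M `` {q}" "x \<in> gc_rel M `` {pm2 p' q'}"
        by (elim UN_E)
      then show "x \<in> gc_rel M `` {pm2 p q}" using eq by metis
    qed
    show "gc_rel M `` {pm2 p q} \<subseteq> (\<Union>p'\<in>gc_rel M `` {p}. \<Union>q'\<in>gc_rel M `` {q}. gc_rel M `` {pm2 p' q'})"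
    proof (rule subsetI)
      fix x assume xin: "x \<in> gc_rel M `` {pm2 p q}"
      show "x \<in> (\<Union>p'\<in>gc_rel M `` {p}. \<Union>q'\<in>gc_rel M `` {q}. gc_rel M `` {pm2 p' q'})"
        by (rule UN_I[OF pq(1)], rule UN_I[OF pq(2)], rule xin)
    qed
  qed
  have "pm_mult (group_completion M) X Y = (\<Union>p\<in>X. \<Union>q\<in>Y. gc_rel M `` {pm2 p q})" for X Y
    unfolding group_completion_def pm2_def by (simp only: pmon.simps)
  note mdef = this
  show ?thesis unfolding mdef by (rule E)
qed

lemma G_cases: "X \<in> pm_carrier (group_completion M) \<Longrightarrow>
  X = {} \<or> (\<exists>p \<in> (pm_carrier M - {pm_zero M}) \<times> (pm_carrier M - {pm_zero M}). X = gc_rel M `` {p})"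
  unfolding G_carrier Un_iff singleton_iff quotient_def by blast

lemma class_in: "p \<in> (pm_carrier M - {pm_zero M}) \<times> (pm_carrier M - {pm_zero M}) \<Longrightarrow>
   gc_rel M `` {p} \<in> pm_carrier (group_completion M)"
  unfolding G_carrier by (rule UnI1, rule quotientI)


lemma pm2_assoc: "p \<in> (pm_carrier M - {pm_zero M}) \<times> (pm_carrier M - {pm_zero M}) \<Longrightarrow>
  q \<in> (pm_carrier M - {pm_zero M}) \<times> (pm_carrier M - {pm_zero M}) \<Longrightarrow>
  r \<in> (pm_carrier M - {pm_zero M}) \<times> (pm_carrier M - {pm_zero M}) \<Longrightarrow>
  pm2 (pm2 p q) r = pm2 p (pm2 q r)"
  unfolding pm2_def by (cases p, cases q, cases r) (simp add: assoc)

lemma pm2_comm: "p \<in> (pm_carrier M - {pm_zero M}) \<times> (pm_carrier M - {pm_zero M}) \<Longrightarrow>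
  q \<in> (pm_carrier M - {pm_zero M}) \<times> (pm_carrier M - {pm_zero M}) \<Longrightarrow>
  pm2 p q = pm2 q p"
  unfolding pm2_def by (cases p, cases q) (simp add: comm)

lemma pm2_one: "p \<in> (pm_carrier M - {pm_zero M}) \<times> (pm_carrier M - {pm_zero M}) \<Longrightarrow>
  pm2 (pm_one M, pm_one M) p = p"
  unfolding pm2_def by (cases p) simp

lemma ee_S: "(pm_one M, pm_one M) \<in> (pm_carrier M - {pm_zero M}) \<times> (pm_carrier M - {pm_zero M})"
  using one_S by blast

lemma G_one_in: "pm_one (group_completion M) \<in> pm_carrier (group_completion M)"
  unfolding G_one by (rule class_in[OF ee_S])

lemma G_empty_in: "{} \<in> pm_carrier (group_completion M)"
  unfolding G_carrier by blast

lemma G_split: "X \<in> pm_carrier (group_completion M) \<Longrightarrow> (X = {} \<Longrightarrow> Q) \<Longrightarrow>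
  (\<And>p. p \<in> (pm_carrier M - {pm_zero M}) \<times> (pm_carrier M - {pm_zero M}) \<Longrightarrow> X = gc_rel M `` {p} \<Longrightarrow> Q) \<Longrightarrow> Q"
  using G_cases by blast

lemma G_closed: "X \<in> pm_carrier (group_completion M) \<Longrightarrow> Y \<in> pm_carrier (group_completion M) \<Longrightarrow>
  pm_mult (group_completion M) X Y \<in> pm_carrier (group_completion M)"
  by (erule G_split; erule G_split; simp add: G_empty_in G_mult pm2_S class_in)

lemma G_assoc: "X \<in> pm_carrier (group_completion M) \<Longrightarrow> Y \<in> pm_carrier (group_completion M) \<Longrightarrow>
  Z \<in> pm_carrier (group_completion M) \<Longrightarrow>
  pm_mult (group_completion M) (pm_mult (group_completion M) X Y) Z =
  pm_mult (group_completion M) X (pm_mult (group_completion M) Y Z)"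
  by (erule G_split; erule G_split; erule G_split; simp add: G_mult pm2_S pm2_assoc)

lemma G_comm: "X \<in> pm_carrier (group_completion M) \<Longrightarrow> Y \<in> pm_carrier (group_completion M) \<Longrightarrow>
  pm_mult (group_completion M) X Y = pm_mult (group_completion M) Y X"
  by (erule G_split; erule G_split; simp add: G_mult pm2_comm)

lemma G_one_l: "X \<in> pm_carrier (group_completion M) \<Longrightarrow>
  pm_mult (group_completion M) (pm_one (group_completion M)) X = X"
  by (erule G_split; simp add: G_one; subst G_mult[OF ee_S]; simp add: pm2_one)

lemma G_pm: "pointed_monoid (group_completion M)"
  unfolding pointed_monoid_def
  using G_one_in G_empty_in G_closed G_assoc G_comm G_one_l by simp

lemma G_pg: "pointed_group (group_completion M)"
  unfolding pointed_group_def
proof (intro conjI ballI)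
  show "pointed_monoid (group_completion M)" by (rule G_pm)
  show "pm_one (group_completion M) \<noteq> pm_zero (group_completion M)"
    using class_self[OF ee_S] by (auto simp: G_one)
  fix X assume X: "X \<in> pm_carrier (group_completion M) - {pm_zero (group_completion M)}"
  then obtain a b where ab: "a \<in> pm_carrier M - {pm_zero M}" "b \<in> pm_carrier M - {pm_zero M}"
    and Xd: "X = gc_rel M `` {(a,b)}"
    using G_cases[of X] by auto
  have ba: "(b,a) \<in> (pm_carrier M - {pm_zero M}) \<times> (pm_carrier M - {pm_zero M})" using ab by blast
  have "pm_mult (group_completion M) X (gc_rel M `` {(b,a)}) = gc_rel M `` {pm2 (a,b) (b,a)}"
    unfolding Xd using ab by (intro G_mult) auto
  also have "\<dots> = gc_rel M `` {(pm_one M, pm_one M)}"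
  proof (subst class_eq)
    show "pm2 (a, b) (b, a) \<in> (pm_carrier M - {pm_zero M}) \<times> (pm_carrier M - {pm_zero M})"
      using ab ba by (intro pm2_S) auto
    show "(pm2 (a, b) (b, a), pm_one M, pm_one M) \<in> gc_rel M"
      using ab dom[of a b] dom[of b a] unfolding pm2_def by (simp add: R_iff comm one_ne)
  qed (rule ee_S)
  finally show "\<exists>Y\<in>pm_carrier (group_completion M). pm_mult (group_completion M) X Y = pm_one (group_completion M)"
    using class_in[OF ba] by (auto simp: G_one)
qed

lemma G_pow: "a \<in> pm_carrier M - {pm_zero M} \<Longrightarrow> b \<in> pm_carrier M - {pm_zero M} \<Longrightarrow>
  pm_pow (group_completion M) (gc_rel M `` {(a,b)}) n = gc_rel M `` {(pm_pow M a n, pm_pow M b n)}"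
proof (induction n)
  case 0 then show ?case by (simp add: G_one)
next
  case (Suc n)
  have "pm_pow (group_completion M) (gc_rel M `` {(a,b)}) (Suc n) =
     pm_mult (group_completion M) (gc_rel M `` {(a,b)}) (gc_rel M `` {(pm_pow M a n, pm_pow M b n)})"
    using Suc by simp
  also have "\<dots> = gc_rel M `` {pm2 (a,b) (pm_pow M a n, pm_pow M b n)}"
    using Suc.prems pow_S[of a n] pow_S[of b n] by (intro G_mult) auto
  finally show ?case by (simp add: pm2_def)
qed

lemma G_tf: "torsionfree M \<Longrightarrow> torsionfree_pgroup (group_completion M)"
  unfolding torsionfree_pgroup_def
proof (intro conjI ballI allI impI)
  assume tf: "torsionfree M"
  show "pointed_group (group_completion M)" by (rule G_pg)
  fix X n assume X: "X \<in> pm_carrier (group_completion M) - {pm_zero (group_completion M)}"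
    and n: "1 \<le> n" and pw: "pm_pow (group_completion M) X n = pm_one (group_completion M)"
  then obtain a b where ab: "a \<in> pm_carrier M - {pm_zero M}" "b \<in> pm_carrier M - {pm_zero M}"
    and Xd: "X = gc_rel M `` {(a,b)}"
    using G_cases[of X] by auto
  have "gc_rel M `` {(pm_pow M a n, pm_pow M b n)} = gc_rel M `` {(pm_one M, pm_one M)}"
    using pw unfolding Xd G_pow[OF ab] G_one .
  then have "((pm_pow M a n, pm_pow M b n), (pm_one M, pm_one M)) \<in> gc_rel M"
    using class_eq[OF _ ee_S] pow_S[OF ab(1)] pow_S[OF ab(2)] by blast
  then have "pm_pow M a n = pm_pow M b n" using ab by (simp add: R_iff)
  then have "a = b" using tf n ab unfolding torsionfree_def by blast
  then show "X = pm_one (group_completion M)"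
    unfolding Xd G_one using ab class_eq[of "(b,b)" "(pm_one M, pm_one M)"] ee_S
    by (simp add: R_iff)
qed

end

definition weak_canc :: "'a pmon \<Rightarrow> bool" where
  "weak_canc A \<longleftrightarrow> (\<forall>a\<in>pm_carrier A. \<forall>b\<in>pm_carrier A. \<forall>c\<in>pm_carrier A.
     pm_mult A a c = pm_mult A b c \<longrightarrow> pm_mult A a c \<noteq> pm_zero A \<longrightarrow> a = b)"

definition weak_tf :: "'a pmon \<Rightarrow> bool" where
  "weak_tf A \<longleftrightarrow> (\<forall>a\<in>pm_carrier A. \<forall>b\<in>pm_carrier A. \<forall>n::nat. n \<ge> 1 \<longrightarrow>
     pm_pow A a n = pm_pow A b n \<longrightarrow> pm_pow A a n \<noteq> pm_zero A \<longrightarrow> a = b)"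

locale primeq = pmono A for A :: "'a pmon" +
  fixes P :: "'a set"
  assumes prime: "pm_prime_ideal A P"
begin

lemma P_sub: "P \<subseteq> pm_carrier A" and zero_P[simp]: "pm_zero A \<in> P"
  and P_mult: "a \<in> pm_carrier A \<Longrightarrow> x \<in> P \<Longrightarrow> pm_mult A a x \<in> P"
  and P_ne: "P \<noteq> pm_carrier A"
  and P_prime: "a \<in> pm_carrier A - P \<Longrightarrow> b \<in> pm_carrier A - P \<Longrightarrow> pm_mult A a b \<notin> P"
  using prime unfolding pm_prime_ideal_def pm_ideal_def by blast+

lemma Pmul_iff: "a \<in> pm_carrier A \<Longrightarrow> b \<in> pm_carrier A \<Longrightarrow> pm_mult A a b \<in> P \<longleftrightarrow> a \<in> P \<or> b \<in> P"
  using P_mult P_prime comm by (metis Diff_iff)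

lemma one_notP: "pm_one A \<notin> P"
proof
  assume "pm_one A \<in> P"
  then have "pm_carrier A \<subseteq> P" using P_mult[of _ "pm_one A"] by auto
  then show False using P_sub P_ne by blast
qed

lemma one_ne_zero: "pm_one A \<noteq> pm_zero A" using one_notP zero_P by metis

abbreviation "Q \<equiv> pm_quot A P"

lemma Q_carrier: "pm_carrier Q = (pm_carrier A - P) \<union> {pm_zero A}"
  unfolding pm_quot_def by (simp only: pmon.simps)
lemma Q_one[simp]: "pm_one Q = pm_one A"
  unfolding pm_quot_def using one_notP by (simp only: pmon.simps if_False)
lemma Q_zero[simp]: "pm_zero Q = pm_zero A"
  unfolding pm_quot_def by (simp only: pmon.simps)
lemma Q_mult: "a \<in> pm_carrier A \<Longrightarrow> b \<in> pm_carrier A \<Longrightarrow>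
   pm_mult Q a b = (if a \<in> P \<or> b \<in> P then pm_zero A else pm_mult A a b)"
  unfolding pm_quot_def using Pmul_iff by (simp only: pmon.simps) auto

lemma Q_zero_l: "pm_mult Q (pm_zero A) x = pm_zero A"
  unfolding pm_quot_def by (simp only: pmon.simps zero_P simp_thms if_True)

lemma Q_carrier_A: "x \<in> pm_carrier Q \<Longrightarrow> x \<in> pm_carrier A"
  unfolding Q_carrier by auto

lemma Q_pm: "pointed_monoid Q"
  unfolding pointed_monoid_def
proof (intro conjI ballI)
  show "pm_one Q \<in> pm_carrier Q" using one_notP by (simp add: Q_carrier)
  show "pm_zero Q \<in> pm_carrier Q" by (simp add: Q_carrier)
  fix a assume a: "a \<in> pm_carrier Q"
  then have aA: "a \<in> pm_carrier A" by (rule Q_carrier_A)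
  show "pm_mult Q (pm_one Q) a = a" using aA one_notP a by (auto simp: Q_mult Q_carrier)
  show "pm_mult Q (pm_zero Q) a = pm_zero Q" using aA by (simp add: Q_mult)
  fix b assume b: "b \<in> pm_carrier Q"
  then have bA: "b \<in> pm_carrier A" by (rule Q_carrier_A)
  show "pm_mult Q a b \<in> pm_carrier Q" using a b aA bA by (auto simp: Q_mult Q_carrier Pmul_iff)
  show "pm_mult Q a b = pm_mult Q b a" using aA bA by (simp add: Q_mult comm)
  fix c assume c: "c \<in> pm_carrier Q"
  then have cA: "c \<in> pm_carrier A" by (rule Q_carrier_A)
  show "pm_mult Q (pm_mult Q a b) c = pm_mult Q a (pm_mult Q b c)"
    using aA bA cA by (auto simp: Q_mult Pmul_iff assoc)
qed

lemma Q_canc: "weak_canc A \<Longrightarrow> cancellative Q"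
  unfolding cancellative_def
proof (intro conjI ballI impI)
  assume wc: "weak_canc A"
  show "pointed_monoid Q" by (rule Q_pm)
  fix a b c assume a: "a \<in> pm_carrier Q" and b: "b \<in> pm_carrier Q" and c: "c \<in> pm_carrier Q"
    and cz: "c \<noteq> pm_zero Q" and e: "pm_mult Q a c = pm_mult Q b c"
  have aA: "a \<in> pm_carrier A" and bA: "b \<in> pm_carrier A" and cA: "c \<in> pm_carrier A"
    using a b c Q_carrier_A by blast+
  have cP: "c \<notin> P" using c cz by (simp add: Q_carrier)
  have aP: "a \<in> P \<Longrightarrow> a = pm_zero A" using a by (auto simp: Q_carrier)
  have bP: "b \<in> P \<Longrightarrow> b = pm_zero A" using b by (auto simp: Q_carrier)
  show "a = b"
  proof (cases "a \<in> P")
    case True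
    then show ?thesis
    proof (cases "b \<in> P")
      case False
      then have "pm_mult A b c \<notin> P" using bA cA cP Pmul_iff by blast
      then show ?thesis using e True False aA bA cA cP zero_P by (auto simp: Q_mult)
    qed (use aP bP True in simp)
  next
    case False
    then show ?thesis
    proof (cases "b \<in> P")
      case True
      have "pm_mult A a c \<notin> P" using aA cA cP False Pmul_iff by blast
      then show ?thesis using e True False aA bA cA cP zero_P by (auto simp: Q_mult)
    next
      case bF: False
      have "pm_mult A a c \<notin> P" using aA cA cP False Pmul_iff by blast
      then have "pm_mult A a c \<noteq> pm_zero A" using zero_P by metis
      moreover have "pm_mult A a c = pm_mult A b c" using e False bF aA bA cA cP by (simp add: Q_mult)
      ultimately show ?thesis using wc aA bA cA unfolding weak_canc_def by blast
    qed
  qed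
qed

lemma pow_notP: "a \<in> pm_carrier A - P \<Longrightarrow> pm_pow A a n \<notin> P"
  by (induction n) (auto simp: one_notP Pmul_iff)

lemma Q_pow: "a \<in> pm_carrier A - P \<Longrightarrow> pm_pow Q a n = pm_pow A a n"
proof (induction n)
  case (Suc n)
  then show ?case using pow_notP[OF Suc.prems, of n] by (simp add: Q_mult)
qed simp

lemma pow_P: "a \<in> pm_carrier A \<Longrightarrow> n \<ge> 1 \<Longrightarrow> a \<in> P \<Longrightarrow> pm_pow A a n \<in> P"
  by (cases n) (auto intro: P_mult simp: Pmul_iff)

lemma Q_tf: "weak_tf A \<Longrightarrow> torsionfree Q"
  unfolding torsionfree_def
proof (intro ballI allI impI)
  assume wt: "weak_tf A"
  fix a b n assume a: "a \<in> pm_carrier Q" and b: "b \<in> pm_carrier Q" and n: "(1::nat) \<le> n"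
    and e: "pm_pow Q a n = pm_pow Q b n"
  have aA: "a \<in> pm_carrier A" and bA: "b \<in> pm_carrier A" using a b Q_carrier_A by blast+
  have aP: "a \<in> P \<Longrightarrow> a = pm_zero A" using a by (auto simp: Q_carrier)
  have bP: "b \<in> P \<Longrightarrow> b = pm_zero A" using b by (auto simp: Q_carrier)
  have Qz: "pm_pow Q (pm_zero A) n = pm_zero A" using n by (cases n) (auto simp: Q_zero_l)
  show "a = b"
  proof (cases "a \<in> P"; cases "b \<in> P")
    assume "a \<in> P" "b \<in> P" then show ?thesis using aP bP by simp
  next
    assume x: "a \<in> P" "b \<notin> P"
    then have "pm_pow Q b n = pm_pow A b n" "pm_pow A b n \<notin> P" using bA Q_pow pow_notP by auto
    then show ?thesis using e aP x Qz zero_P by metis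
  next
    assume x: "a \<notin> P" "b \<in> P"
    then have "pm_pow Q a n = pm_pow A a n" "pm_pow A a n \<notin> P" using aA Q_pow pow_notP by auto
    then show ?thesis using e bP x Qz zero_P by metis
  next
    assume x: "a \<notin> P" "b \<notin> P"
    then have "pm_pow A a n = pm_pow A b n" "pm_pow A a n \<notin> P" using aA bA e Q_pow pow_notP by auto
    then show ?thesis using wt aA bA n zero_P unfolding weak_tf_def by metis
  qed
qed

end

lemma quot_pow_nz: "pm_zero C \<in> I \<Longrightarrow> pm_pow (pm_quot C I) a n \<noteq> pm_zero C \<Longrightarrow>
   pm_pow (pm_quot C I) a n = pm_pow C a n \<and> pm_pow C a n \<notin> I"
proof (induction n)
  case 0
  then show ?case unfolding pm_quot_def by (auto split: if_splits)
next
  case (Suc n)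
  let ?x = "pm_pow (pm_quot C I) a n"
  have m: "pm_pow (pm_quot C I) a (Suc n) = (if a \<in> I \<or> ?x \<in> I \<or> pm_mult C a ?x \<in> I then pm_zero C else pm_mult C a ?x)"
    unfolding pm_quot_def by simp
  then have nc: "\<not> (a \<in> I \<or> ?x \<in> I \<or> pm_mult C a ?x \<in> I)" using Suc.prems by (auto split: if_splits)
  then have "?x \<noteq> pm_zero C" using Suc.prems by auto
  then have "?x = pm_pow C a n" using Suc by blast
  then show ?case using m nc by simp
qed

lemma quot_mult_nz: "pm_mult (pm_quot C I) a b \<noteq> pm_zero C \<Longrightarrow>
   pm_mult (pm_quot C I) a b = pm_mult C a b \<and> a \<notin> I \<and> b \<notin> I \<and> pm_mult C a b \<notin> I"
  unfolding pm_quot_def by (auto split: if_splits)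

lemma quot_closed: "pointed_monoid C \<Longrightarrow> a \<in> pm_carrier (pm_quot C I) \<Longrightarrow> b \<in> pm_carrier (pm_quot C I) \<Longrightarrow>
  pm_mult (pm_quot C I) a b \<in> pm_carrier (pm_quot C I)"
  unfolding pm_quot_def pointed_monoid_def by auto

lemma quot_one: "pointed_monoid C \<Longrightarrow> pm_one (pm_quot C I) \<in> pm_carrier (pm_quot C I)"
  unfolding pm_quot_def pointed_monoid_def by auto

lemma quot_sub: "a \<in> pm_carrier (pm_quot C I) \<Longrightarrow> pointed_monoid C \<Longrightarrow> a \<in> pm_carrier C"
  unfolding pm_quot_def pointed_monoid_def by auto

lemma iso_pow: "pointed_monoid C \<Longrightarrow> pm_iso f (pm_quot C I) A \<Longrightarrow> x \<in> pm_carrier (pm_quot C I) \<Longrightarrow>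
  f (pm_pow (pm_quot C I) x n) = pm_pow A (f x) n \<and> pm_pow (pm_quot C I) x n \<in> pm_carrier (pm_quot C I)"
proof (induction n)
  case 0 then show ?case using quot_one unfolding pm_iso_def by auto
next
  case (Suc n)
  then show ?case using quot_closed[of C x I "pm_pow (pm_quot C I) x n"] unfolding pm_iso_def by auto
qed

lemma wc_from: "cancellative C \<Longrightarrow> pm_ideal C I \<Longrightarrow> pm_iso f (pm_quot C I) A \<Longrightarrow> weak_canc A"
  unfolding weak_canc_def
proof (intro ballI impI)
  assume cC: "cancellative C" and iI: "pm_ideal C I" and iso: "pm_iso f (pm_quot C I) A"
  have pmC: "pointed_monoid C" using cC unfolding cancellative_def by blast
  have z: "pm_zero C \<in> I" using iI unfolding pm_ideal_def by blast
  have bij: "bij_betw f (pm_carrier (pm_quot C I)) (pm_carrier A)" and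
    hom: "\<And>a b. a \<in> pm_carrier (pm_quot C I) \<Longrightarrow> b \<in> pm_carrier (pm_quot C I) \<Longrightarrow>
        f (pm_mult (pm_quot C I) a b) = pm_mult A (f a) (f b)"
    and fz: "f (pm_zero (pm_quot C I)) = pm_zero A"
    using iso unfolding pm_iso_def by blast+
  have fz': "f (pm_zero C) = pm_zero A" using fz unfolding pm_quot_def by simp
  fix a b c assume a: "a \<in> pm_carrier A" and b: "b \<in> pm_carrier A" and c: "c \<in> pm_carrier A"
    and e: "pm_mult A a c = pm_mult A b c" and nz: "pm_mult A a c \<noteq> pm_zero A"
  obtain a' b' c' where a': "a' \<in> pm_carrier (pm_quot C I)" "a = f a'"
    and b': "b' \<in> pm_carrier (pm_quot C I)" "b = f b'" and c': "c' \<in> pm_carrier (pm_quot C I)" "c = f c'"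
    using a b c bij unfolding bij_betw_def by blast
  have "f (pm_mult (pm_quot C I) a' c') = f (pm_mult (pm_quot C I) b' c')"
    using hom a' b' c' e by simp
  then have eq: "pm_mult (pm_quot C I) a' c' = pm_mult (pm_quot C I) b' c'"
    using bij quot_closed[OF pmC] a' b' c' unfolding bij_betw_def inj_on_def by blast
  have n1: "pm_mult (pm_quot C I) a' c' \<noteq> pm_zero C"
  proof
    assume "pm_mult (pm_quot C I) a' c' = pm_zero C"
    then have "pm_mult A a c = pm_zero A" using hom[OF a'(1) c'(1)] a'(2) c'(2) fz' by simp
    then show False using nz by simp
  qed
  then have n2: "pm_mult (pm_quot C I) b' c' \<noteq> pm_zero C" using eq by simp
  have "pm_mult C a' c' = pm_mult C b' c'" using quot_mult_nz[OF n1] quot_mult_nz[OF n2] eq by simp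
  moreover have "c' \<noteq> pm_zero C" using quot_mult_nz[OF n1] z by blast
  ultimately have "a' = b'" using cC quot_sub[OF _ pmC] a' b' c' unfolding cancellative_def by blast
  then show "a = b" using a' b' by simp
qed

lemma wt_from: "cancellative C \<Longrightarrow> torsionfree C \<Longrightarrow> pm_ideal C I \<Longrightarrow> pm_iso f (pm_quot C I) A \<Longrightarrow> weak_tf A"
  unfolding weak_tf_def
proof (intro ballI allI impI)
  assume cC: "cancellative C" and tC: "torsionfree C" and iI: "pm_ideal C I" and iso: "pm_iso f (pm_quot C I) A"
  have pmC: "pointed_monoid C" using cC unfolding cancellative_def by blast
  have z: "pm_zero C \<in> I" using iI unfolding pm_ideal_def by blast
  have bij: "bij_betw f (pm_carrier (pm_quot C I)) (pm_carrier A)"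
    and fz: "f (pm_zero (pm_quot C I)) = pm_zero A"
    using iso unfolding pm_iso_def by blast+
  have fz': "f (pm_zero C) = pm_zero A" using fz unfolding pm_quot_def by simp
  fix a b n assume a: "a \<in> pm_carrier A" and b: "b \<in> pm_carrier A" and n: "(1::nat) \<le> n"
    and e: "pm_pow A a n = pm_pow A b n" and nz: "pm_pow A a n \<noteq> pm_zero A"
  obtain a' b' where a': "a' \<in> pm_carrier (pm_quot C I)" "a = f a'"
    and b': "b' \<in> pm_carrier (pm_quot C I)" "b = f b'"
    using a b bij unfolding bij_betw_def by blast
  have "f (pm_pow (pm_quot C I) a' n) = f (pm_pow (pm_quot C I) b' n)"
    using iso_pow[OF pmC iso a'(1)] iso_pow[OF pmC iso b'(1)] a' b' e by simp
  then have eq: "pm_pow (pm_quot C I) a' n = pm_pow (pm_quot C I) b' n"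
    using bij iso_pow[OF pmC iso a'(1)] iso_pow[OF pmC iso b'(1)] unfolding bij_betw_def inj_on_def by blast
  have n1: "pm_pow (pm_quot C I) a' n \<noteq> pm_zero C"
  proof
    assume "pm_pow (pm_quot C I) a' n = pm_zero C"
    then have "pm_pow A a n = pm_zero A" using iso_pow[OF pmC iso a'(1), of n] a'(2) fz' by simp
    then show False using nz by simp
  qed
  then have n2: "pm_pow (pm_quot C I) b' n \<noteq> pm_zero C" using eq by simp
  have "pm_pow C a' n = pm_pow C b' n" using quot_pow_nz[OF z n1] quot_pow_nz[OF z n2] eq by simp
  then have "a' = b'" using tC quot_sub[OF _ pmC] a' b' n unfolding torsionfree_def by blast
  then show "a = b" using a' b' by simp
qed


lemma canc_wc: "cancellative A \<Longrightarrow> weak_canc A"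
  unfolding weak_canc_def cancellative_def
proof (intro ballI impI)
  fix a b c
  assume h: "pointed_monoid A \<and> (\<forall>a\<in>pm_carrier A. \<forall>b\<in>pm_carrier A. \<forall>c\<in>pm_carrier A.
        c \<noteq> pm_zero A \<longrightarrow> pm_mult A a c = pm_mult A b c \<longrightarrow> a = b)"
    and a: "a \<in> pm_carrier A" and b: "b \<in> pm_carrier A" and c: "c \<in> pm_carrier A"
    and e: "pm_mult A a c = pm_mult A b c" and nz: "pm_mult A a c \<noteq> pm_zero A"
  interpret pmono A using h by (simp add: pmono_def)
  have "c \<noteq> pm_zero A" using nz a by auto
  then show "a = b" using h a b c e by blast
qed

context primeq
begin

lemma SQ_eq: "pm_carrier Q - {pm_zero Q} = pm_carrier A - P"
  unfolding Q_carrier using zero_P by auto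

lemma R_QA: "p \<in> (pm_carrier A - P) \<times> (pm_carrier A - P) \<Longrightarrow> q \<in> (pm_carrier A - P) \<times> (pm_carrier A - P) \<Longrightarrow>
  (p,q) \<in> gc_rel Q \<longleftrightarrow> (p,q) \<in> gc_rel A"
  unfolding gc_rel_def using zero_P by (cases p, cases q) (auto simp: Q_mult SQ_eq Q_carrier)

lemma normal_Q:
  assumes cA: "cancellative A" and nA: "normal A"
  shows "normal Q"
proof -
  interpret CA: canc A
    by (rule canc.intro[OF pmono_axioms canc_axioms.intro[OF cA one_ne_zero]])
  have oQ: "pm_one Q \<noteq> pm_zero Q" using one_ne_zero by simp
  interpret CQ: canc Q
    by (rule canc.intro[OF pmono.intro[OF Q_pm] canc_axioms.intro[OF Q_canc[OF canc_wc[OF cA]] oQ]])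
  have emb_in: "gc_emb Q x \<in> pm_carrier (group_completion Q)" if x: "x \<in> pm_carrier Q" for x
  proof (cases "x = pm_zero Q")
    case True then show ?thesis by (simp add: gc_emb_def CQ.G_empty_in)
  next
    case False
    then have "(x, pm_one Q) \<in> (pm_carrier Q - {pm_zero Q}) \<times> (pm_carrier Q - {pm_zero Q})"
      using x CQ.one_S by blast
    then show ?thesis using False by (simp add: gc_emb_def CQ.class_in)
  qed
  have sup: "gc_emb Q ` pm_carrier Q \<subseteq> normalization Q"
  proof
    fix X assume "X \<in> gc_emb Q ` pm_carrier Q"
    then obtain x where x: "x \<in> pm_carrier Q" "X = gc_emb Q x" by blast
    then have XG: "X \<in> pm_carrier (group_completion Q)" using emb_in by simp
    have "pm_pow (group_completion Q) X 1 = X"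
      using XG CQ.G_comm[OF XG CQ.G_one_in] CQ.G_one_l[OF XG] by simp
    then show "X \<in> normalization Q" unfolding normalization_def using XG x by force
  qed
  have sub: "normalization Q \<subseteq> gc_emb Q ` pm_carrier Q"
  proof
    fix X assume "X \<in> normalization Q"
    then obtain n c where XG: "X \<in> pm_carrier (group_completion Q)" and n: "1 \<le> n"
      and c: "c \<in> pm_carrier Q" and pw: "pm_pow (group_completion Q) X n = gc_emb Q c"
      unfolding normalization_def by blast
    show "X \<in> gc_emb Q ` pm_carrier Q"
    proof (rule CQ.G_split[OF XG])
      assume "X = {}"
      then have "X = gc_emb Q (pm_zero Q)" by (simp add: gc_emb_def)
      then show ?thesis using CQ.zero_in by blast
    next
      fix p assume p: "p \<in> (pm_carrier Q - {pm_zero Q}) \<times> (pm_carrier Q - {pm_zero Q})"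
        and Xp: "X = gc_rel Q `` {p}"
      obtain a b where pab: "p = (a,b)" by (cases p)
      have aP: "a \<in> pm_carrier A - P" and bP: "b \<in> pm_carrier A - P" using p pab SQ_eq by auto
      have aQ: "a \<in> pm_carrier Q - {pm_zero Q}" and bQ: "b \<in> pm_carrier Q - {pm_zero Q}" using p pab by auto
      have anP: "pm_pow A a n \<in> pm_carrier A - P" and bnP: "pm_pow A b n \<in> pm_carrier A - P"
        using pow_notP aP bP by auto
      have pwQ: "pm_pow (group_completion Q) X n = gc_rel Q `` {(pm_pow A a n, pm_pow A b n)}"
        unfolding Xp pab CQ.G_pow[OF aQ bQ] Q_pow[OF aP] Q_pow[OF bP] ..
      have abn: "(pm_pow A a n, pm_pow A b n) \<in> (pm_carrier Q - {pm_zero Q}) \<times> (pm_carrier Q - {pm_zero Q})"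
        using anP bnP SQ_eq by auto
      have cz: "c \<noteq> pm_zero Q"
      proof
        assume "c = pm_zero Q"
        then have "gc_rel Q `` {(pm_pow A a n, pm_pow A b n)} = {}" using pw pwQ by (simp add: gc_emb_def)
        then show False using CQ.class_self[OF abn] by simp
      qed
      have c1: "(c, pm_one Q) \<in> (pm_carrier Q - {pm_zero Q}) \<times> (pm_carrier Q - {pm_zero Q})"
        using c cz CQ.one_S by blast
      have "gc_rel Q `` {(pm_pow A a n, pm_pow A b n)} = gc_rel Q `` {(c, pm_one Q)}"
        using pw pwQ cz by (simp add: gc_emb_def)
      then have "((pm_pow A a n, pm_pow A b n), (c, pm_one Q)) \<in> gc_rel Q"
        using CQ.class_eq[OF abn c1] by simp
      then have rA: "((pm_pow A a n, pm_pow A b n), (c, pm_one A)) \<in> gc_rel A"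
      proof -
        have abn': "(pm_pow A a n, pm_pow A b n) \<in> (pm_carrier A - P) \<times> (pm_carrier A - P)"
          using abn unfolding SQ_eq .
        have c1': "(c, pm_one A) \<in> (pm_carrier A - P) \<times> (pm_carrier A - P)"
          using c1 unfolding SQ_eq by simp
        show ?thesis using R_QA[OF abn' c1'] \<open>((pm_pow A a n, pm_pow A b n), (c, pm_one Q)) \<in> gc_rel Q\<close> by simp
      qed
      have SA: "pm_carrier A - P \<subseteq> pm_carrier A - {pm_zero A}" using zero_P by blast
      have abA: "(a,b) \<in> (pm_carrier A - {pm_zero A}) \<times> (pm_carrier A - {pm_zero A})" using aP bP SA by blast
      have abnA: "(pm_pow A a n, pm_pow A b n) \<in> (pm_carrier A - {pm_zero A}) \<times> (pm_carrier A - {pm_zero A})"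
        using anP bnP SA by blast
      have cA': "c \<in> pm_carrier A" "c \<noteq> pm_zero A" using c cz Q_carrier_A by auto
      have c1A: "(c, pm_one A) \<in> (pm_carrier A - {pm_zero A}) \<times> (pm_carrier A - {pm_zero A})"
        using cA' CA.one_S by blast
      let ?B = "gc_rel A `` {(a,b)}"
      have "pm_pow (group_completion A) ?B n = gc_rel A `` {(pm_pow A a n, pm_pow A b n)}"
        using CA.G_pow aP bP SA by blast
      also have "\<dots> = gc_rel A `` {(c, pm_one A)}" using CA.class_eq[OF abnA c1A] rA by simp
      also have "\<dots> = gc_emb A c" using cA' by (simp add: gc_emb_def)
      finally have "?B \<in> normalization A"
        unfolding normalization_def using CA.class_in[OF abA] n cA'(1) by blast
      then obtain d where d: "d \<in> pm_carrier A" "?B = gc_emb A d" using nA unfolding normal_def by blast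
      have dz: "d \<noteq> pm_zero A"
      proof
        assume "d = pm_zero A"
        then have "?B = {}" using d by (simp add: gc_emb_def)
        then show False using CA.class_self[OF abA] by simp
      qed
      have d1A: "(d, pm_one A) \<in> (pm_carrier A - {pm_zero A}) \<times> (pm_carrier A - {pm_zero A})"
        using d dz CA.one_S by blast
      have "?B = gc_rel A `` {(d, pm_one A)}" using d dz by (simp add: gc_emb_def)
      then have rd: "((a,b),(d, pm_one A)) \<in> gc_rel A" using CA.class_eq[OF abA d1A] by simp
      then have "a = pm_mult A b d" using aP by (auto simp: CA.R_iff)
      then have dP: "d \<notin> P" using P_mult[of b d] aP bP by auto
      have d1Q: "(d, pm_one A) \<in> (pm_carrier A - P) \<times> (pm_carrier A - P)" using d dP one_notP one_in by blast
      have "((a,b),(d, pm_one A)) \<in> gc_rel Q" using R_QA[OF _ d1Q] rd aP bP by blast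
      then have "X = gc_rel Q `` {(d, pm_one A)}"
      proof -
        have abQ: "(a,b) \<in> (pm_carrier Q - {pm_zero Q}) \<times> (pm_carrier Q - {pm_zero Q})" using p pab by simp
        have d1Q': "(d, pm_one A) \<in> (pm_carrier Q - {pm_zero Q}) \<times> (pm_carrier Q - {pm_zero Q})"
          unfolding SQ_eq by (rule d1Q)
        show ?thesis unfolding Xp pab using CQ.class_eq[OF abQ d1Q'] \<open>((a,b),(d, pm_one A)) \<in> gc_rel Q\<close> by simp
      qed
      then have "X = gc_emb Q d" using dz by (simp add: gc_emb_def)
      moreover have "d \<in> pm_carrier Q" using d dP by (simp add: Q_carrier)
      ultimately show ?thesis by blast
    qed
  qed
  show ?thesis unfolding normal_def using sub sup by blast
qed

end

theorem proposition1p5: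
  fixes A :: "'a pmon" and P :: "'a set"
  assumes "pointed_monoid A"
    and "pm_prime_ideal A P"
  shows "(pc TYPE('c) A \<longrightarrow> cancellative (pm_quot A P))
       \<and> (pctf TYPE('d) A \<longrightarrow> torsionfree_pgroup (group_completion (pm_quot A P)))
       \<and> (cancellative A \<and> normal A \<longrightarrow> cancellative (pm_quot A P) \<and> normal (pm_quot A P))"
proof -
  interpret primeq A P
    by (rule primeq.intro[OF pmono.intro[OF assms(1)] primeq_axioms.intro[OF assms(2)]])
  have oQ: "pm_one (pm_quot A P) \<noteq> pm_zero (pm_quot A P)" using one_ne_zero by simp
  have p1: "pc TYPE('c) A \<longrightarrow> cancellative (pm_quot A P)"
  proof
    assume "pc TYPE('c) A"
    then obtain C :: "'c pmon" and I f where "cancellative C" "pm_ideal C I" "pm_iso f (pm_quot C I) A"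
      unfolding pc_def by blast
    then show "cancellative (pm_quot A P)" using wc_from Q_canc by blast
  qed
  have p2: "pctf TYPE('d) A \<longrightarrow> torsionfree_pgroup (group_completion (pm_quot A P))"
  proof
    assume "pctf TYPE('d) A"
    then obtain C :: "'d pmon" and I f where h: "cancellative C" "torsionfree C" "pm_ideal C I" "pm_iso f (pm_quot C I) A"
      unfolding pctf_def by blast
    have cQ: "cancellative (pm_quot A P)" using h wc_from Q_canc by blast
    have tQ: "torsionfree (pm_quot A P)" using h wt_from Q_tf by blast
    have "canc (pm_quot A P)"
      by (rule canc.intro[OF pmono.intro[OF Q_pm] canc_axioms.intro[OF cQ oQ]])
    then show "torsionfree_pgroup (group_completion (pm_quot A P))" using canc.G_tf tQ by blast
  qed
  have p3: "cancellative A \<and> normal A \<longrightarrow> cancellative (pm_quot A P) \<and> normal (pm_quot A P)"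
    using Q_canc canc_wc normal_Q by blast
  show ?thesis using p1 p2 p3 by blast
qed

end
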